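(* Let $\alpha,\beta>0$, $\mu>0$, $\lambda_1,\lambda_2\ge 0$ with $\lambda_1>\lambda_2$, and fix a real $\omega>0$. Let $$\Delta(s,\omega)=\det(Q+sR-\omega I)=(\lambda_1-\mu)(\lambda_2-\mu)s^2-\big[(\lambda_1-\mu)(\omega+\beta)+(\lambda_2-\mu)(\omega+\alpha)\big]s+\omega(\omega+\alpha+\beta),$$ and, when $(\lambda_1-\mu)(\lambda_2-\mu)\neq 0$, let $$s_{1,2}(\omega)=\frac{b\pm\sqrt{b^2-4\omega(\omega+\alpha+\beta)(\lambda_1-\mu)(\lambda_2-\mu)}}{2(\lambda_1-\mu)(\lambda_2-\mu)},\qquad b=(\lambda_1-\mu)(\omega+\beta)+(\lambda_2-\mu)(\omega+\alpha),$$ with $+$ for $s_1$ and $-$ for $s_2$. Then: 1. If $\lambda_2>\mu$ (hence $\lambda_1>\mu$), no starvation occurs (for every initial buffer level $x>0$, $X(t)>0$ for all $t\ge 0$). 2. If $\lambda_2<\mu<\lambda_1$, then $\mathrm{Re}(s_2(\omega))>0$ and $\mathrm{Re}(s_1(\omega))<0$. 3. If $\lambda_2<\mu$ and $\lambda_1<\mu$, then $\mathrm{Re}(s_1(\omega))<0$ and $\mathrm{Re}(s_2(\omega))<0$. 4. If $\lambda_2=\mu$ (hence $\lambda_1>\mu$), no starvation occurs. 5. If $\lambda_1=\mu$ (hence $\lambda_2<\mu$), then $\Delta(\cdot,\omega)$ has the single root $s(\omega)=\dfrac{\omega(\omega+\alpha+\beta)}{(\lambda_2-\mu)(\omega+\alpha)}$,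 and $\mathrm{Re}(s(\omega))<0$.
   Context: Two-state Markov modulated fluid model of a playout buffer: $\{I(t),t\ge0\}$ is a continuous-time Markov chain on $\{1,2\}$ with generator $Q=\begin{pmatrix}-\beta&\beta\\ \alpha&-\alpha\end{pmatrix}$, and the rate matrix is $R=\mathrm{diag}(\lambda_2-\mu,\ \lambda_1-\mu)$, i.e. frames arrive at rate $\lambda_2$ in state 1 and $\lambda_1$ in state 2 and are played at constant rate $\mu$. The buffer content $X(t)\ge 0$ evolves as $\frac{d}{dt}X(t)=R_{I(t)I(t)}$, starting from $X(0)=x>0$. Starvation means that the buffer empties, i.e. $\tau=\inf\{t>0:X(t)=0\}<\infty$. The variable $\omega$ is the Laplace transform variable for the starvation time $\tau$; $I$ denotes the $2\times 2$ identity matrix. *)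

theory Defs
  imports "HOL-Analysis.Analysis"
begin

text \<open>Net rate of change of the buffer in environment state i:
  state 1: arrivals at rate lambda2, state 2: arrivals at rate lambda1; playout at rate mu.
  (Diagonal entries of R = diag(lambda2 - mu, lambda1 - mu).)\<close>
definition fluid_rate :: "real \<Rightarrow> real \<Rightarrow> real \<Rightarrow> nat \<Rightarrow> real" where
  "fluid_rate l1 l2 mu i = (if i = 1 then l2 - mu else l1 - mu)"

text \<open>Sample-path description of the fluid model: the environment path I takes values in
  {1,2}; the buffer content X is continuous, starts at x, and (off a countable set of
  switching times) has derivative R_{I(t)I(t)}.\<close>
definition fluid_path ::
  "real \<Rightarrow> real \<Rightarrow> real \<Rightarrow> real \<Rightarrow> (real \<Rightarrow> nat) \<Rightarrow> (real \<Rightarrow> real) \<Rightarrow> bool" where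
  "fluid_path l1 l2 mu x I X \<longleftrightarrow>
     X 0 = x \<and> continuous_on {0..} X \<and> (\<forall>t\<ge>0. I t \<in> {1, 2}) \<and>
     (\<exists>C. countable C \<and>
        (\<forall>t\<in>{0<..} - C. (X has_real_derivative fluid_rate l1 l2 mu (I t)) (at t)))"

definition starvation :: "(real \<Rightarrow> real) \<Rightarrow> bool" where
  "starvation X \<longleftrightarrow> (\<exists>t>0. X t = 0)"

definition Delta :: "real \<Rightarrow> real \<Rightarrow> real \<Rightarrow> real \<Rightarrow> real \<Rightarrow> real \<Rightarrow> complex \<Rightarrow> complex" where
  "Delta alpha beta mu l1 l2 w s =
     of_real ((l1 - mu) * (l2 - mu)) * s ^ 2
     - of_real ((l1 - mu) * (w + beta) + (l2 - mu) * (w + alpha)) * s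
     + of_real (w * (w + alpha + beta))"

definition bcoef :: "real \<Rightarrow> real \<Rightarrow> real \<Rightarrow> real \<Rightarrow> real \<Rightarrow> real \<Rightarrow> real" where
  "bcoef alpha beta mu l1 l2 w = (l1 - mu) * (w + beta) + (l2 - mu) * (w + alpha)"

definition discr :: "real \<Rightarrow> real \<Rightarrow> real \<Rightarrow> real \<Rightarrow> real \<Rightarrow> real \<Rightarrow> real" where
  "discr alpha beta mu l1 l2 w =
     (bcoef alpha beta mu l1 l2 w)^2 - 4 * w * (w + alpha + beta) * (l1 - mu) * (l2 - mu)"

definition s1 :: "real \<Rightarrow> real \<Rightarrow> real \<Rightarrow> real \<Rightarrow> real \<Rightarrow> real \<Rightarrow> complex" where
  "s1 alpha beta mu l1 l2 w =
     (of_real (bcoef alpha beta mu l1 l2 w) + csqrt (of_real (discr alpha beta mu l1 l2 w)))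
     / of_real (2 * (l1 - mu) * (l2 - mu))"

definition s2 :: "real \<Rightarrow> real \<Rightarrow> real \<Rightarrow> real \<Rightarrow> real \<Rightarrow> real \<Rightarrow> complex" where
  "s2 alpha beta mu l1 l2 w =
     (of_real (bcoef alpha beta mu l1 l2 w) - csqrt (of_real (discr alpha beta mu l1 l2 w)))
     / of_real (2 * (l1 - mu) * (l2 - mu))"

end

theory Submission
  imports Defs
begin

lemma mono_aux:
  fixes g :: "real \<Rightarrow> real"
  assumes ab: "a \<le> b" and cont: "continuous_on {a..b} g" and C: "countable C"
    and der: "\<And>t. t \<in> {a<..<b} - C \<Longrightarrow> \<exists>l>0. (g has_real_derivative l) (at t)"
  shows "g a \<le> g b"
proof (rule ccontr)
  assume "\<not> g a \<le> g b"
  hence gab: "g b < g a" by simp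
  have "uncountable {g b<..<g a}" using gab uncountable_open_interval by blast
  moreover have "countable (g ` C)" using C by simp
  ultimately obtain y where y: "y \<in> {g b<..<g a}" "y \<notin> g ` C"
    by (metis countable_subset subsetI)
  define T where "T = {t \<in> {a..b}. y \<le> g t}"
  have cl: "closed T" unfolding T_def
    by (rule continuous_on_closed_Collect_le) (auto intro: cont continuous_intros)
  have ne: "a \<in> T" using y ab unfolding T_def by auto
  have bdd: "bdd_above T" unfolding T_def by (auto intro!: bdd_aboveI[of _ b])
  define t0 where "t0 = Sup T"
  have t0T: "t0 \<in> T" unfolding t0_def using closed_contains_Sup[OF _ bdd cl] ne by blast
  have ub: "\<And>t. t \<in> T \<Longrightarrow> t \<le> t0" unfolding t0_def using bdd by (simp add: cSup_upper)
  have t0ab: "a \<le> t0" "t0 \<le> b" using t0T T_def by auto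
  have "g b \<le> y" "y \<le> g t0" using y t0T T_def by auto
  moreover have "continuous_on {t0..b} g" using cont t0ab by (auto elim: continuous_on_subset)
  ultimately obtain t1 where t1: "t0 \<le> t1" "t1 \<le> b" "g t1 = y"
    using IVT2'[of g b y t0] t0ab by auto
  have "t1 \<in> T" using t1 t0ab unfolding T_def by auto
  hence "t1 \<le> t0" by (rule ub)
  hence "t1 = t0" using t1 by simp
  hence gt0: "g t0 = y" using t1 by simp
  have "t0 \<noteq> a" using gt0 y by auto
  moreover have "t0 \<noteq> b" using gt0 y by auto
  moreover have "t0 \<notin> C" using gt0 y by auto
  ultimately have "t0 \<in> {a<..<b} - C" using t0ab by auto
  then obtain l where l: "l > 0" "(g has_real_derivative l) (at t0)"
    using der by blast
  then obtain d where d: "d > 0" "\<And>h. h > 0 \<Longrightarrow> h < d \<Longrightarrow> g t0 < g (t0 + h)"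
    using DERIV_pos_inc_right by blast
  define h where "h = min d (b - t0) / 2"
  have hpos: "h > 0" "h < d" "t0 + h \<le> b" using d \<open>t0 \<noteq> b\<close> t0ab unfolding h_def by (auto simp: min_def field_simps)
  have "t0 + h \<in> T" using d(2)[OF hpos(1,2)] gt0 hpos t0ab unfolding T_def by auto
  hence "t0 + h \<le> t0" by (rule ub)
  thus False using hpos by simp
qed

lemma mono_countable:
  fixes f :: "real \<Rightarrow> real"
  assumes ab: "a \<le> b" and cont: "continuous_on {a..b} f" and C: "countable C"
    and der: "\<And>t. t \<in> {a<..<b} - C \<Longrightarrow> \<exists>l\<ge>0. (f has_real_derivative l) (at t)"
  shows "f a \<le> f b"
proof -
  have *: "f a \<le> f b + e * (b - a)" if e: "e > 0" for e
  proof -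
    have "(\<lambda>t. f t + e * t) a \<le> (\<lambda>t. f t + e * t) b"
    proof (rule mono_aux[OF ab _ C])
      show "continuous_on {a..b} (\<lambda>t. f t + e * t)" using cont by (intro continuous_intros)
      fix t assume "t \<in> {a<..<b} - C"
      then obtain l where "l \<ge> 0" "(f has_real_derivative l) (at t)" using der by blast
      thus "\<exists>l>0. ((\<lambda>t. f t + e * t) has_real_derivative l) (at t)" using e
        by (intro exI[of _ "l + e"]) (auto intro!: derivative_eq_intros)
    qed
    thus ?thesis by (simp add: algebra_simps)
  qed
  show ?thesis
  proof (cases "a = b")
    case True thus ?thesis by simp
  next
    case False
    hence ba: "b - a > 0" using ab by simp
    show ?thesis
    proof (rule ccontr)
      assume "\<not> f a \<le> f b"
      hence d: "f a - f b > 0" by simp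
      define e where "e = (f a - f b) / (2 * (b - a))"
      have "e > 0" using d ba unfolding e_def by simp
      hence f1: "f a \<le> f b + e * (b - a)" using * by blast
      have f2: "e * (b - a) = (f a - f b) / 2" using ba unfolding e_def by (simp add: field_simps)
      have "f a \<le> f b + (f a - f b) / 2" using f1 unfolding f2 .
      thus False using d by argo
    qed
  qed
qed

lemma no_starve:
  assumes r1: "l1 \<ge> mu" and r2: "l2 \<ge> mu" and x: "x > 0" and fp: "fluid_path l1 l2 mu x I X"
  shows "\<not> starvation X \<and> (\<forall>t\<ge>0. X t > 0)"
proof -
  from fp obtain C where X0: "X 0 = x" and cont: "continuous_on {0..} X"
    and I: "\<forall>t\<ge>0. I t \<in> {1, 2}" and C: "countable C"
    and der: "\<forall>t\<in>{0<..} - C. (X has_real_derivative fluid_rate l1 l2 mu (I t)) (at t)"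
    unfolding fluid_path_def by blast
  have pos: "X t > 0" if t: "t \<ge> 0" for t
  proof -
    have "X 0 \<le> X t"
    proof (rule mono_countable[OF t _ C])
      show "continuous_on {0..t} X" using cont by (rule continuous_on_subset) auto
      fix s assume s: "s \<in> {0<..<t} - C"
      hence "(X has_real_derivative fluid_rate l1 l2 mu (I s)) (at s)" using der by auto
      moreover have "fluid_rate l1 l2 mu (I s) \<ge> 0" using r1 r2 unfolding fluid_rate_def by auto
      ultimately show "\<exists>l\<ge>0. (X has_real_derivative l) (at s)" by blast
    qed
    thus ?thesis using X0 x by simp
  qed
  thus ?thesis unfolding starvation_def by (metis less_eq_real_def less_irrefl)
qed

lemma part2:
  fixes alpha beta mu l1 l2 w :: real
  assumes "alpha > 0" "beta > 0" "w > 0" "l2 < mu" "mu < l1"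
  shows "Re (s2 alpha beta mu l1 l2 w) > 0 \<and> Re (s1 alpha beta mu l1 l2 w) < 0"
proof -
  define A where "A = (l1 - mu) * (l2 - mu)"
  define B where "B = bcoef alpha beta mu l1 l2 w"
  define D where "D = discr alpha beta mu l1 l2 w"
  have A: "A < 0" unfolding A_def using assms by (simp add: mult_pos_neg)
  have c: "w * (w + alpha + beta) > 0" using assms by simp
  have "D = B^2 - 4 * (w * (w + alpha + beta)) * A" unfolding D_def B_def A_def discr_def by (simp add: algebra_simps)
  moreover have "4 * (w * (w + alpha + beta)) * A < 0" using A c by (simp add: mult_pos_neg)
  ultimately have DB: "D > B^2" by linarith
  moreover have "B^2 \<ge> 0" by simp
  ultimately have D0: "D \<ge> 0" by linarith
  have "sqrt D > sqrt (B^2)" using DB by (rule real_sqrt_less_mono)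
  hence sq: "sqrt D > \<bar>B\<bar>" by simp
  have cs: "csqrt (complex_of_real D) = complex_of_real (sqrt D)" by (rule of_real_sqrt[OF D0, symmetric])
  have den: "2 * (l1 - mu) * (l2 - mu) = 2 * A" unfolding A_def by simp
  have "Re (s2 alpha beta mu l1 l2 w) = (B - sqrt D) / (2 * A)"
    unfolding s2_def B_def[symmetric] D_def[symmetric] cs den by (simp add: Re_divide_of_real)
  moreover have "(B - sqrt D) / (2 * A) > 0" using sq A by (intro divide_neg_neg) auto
  moreover have "Re (s1 alpha beta mu l1 l2 w) = (B + sqrt D) / (2 * A)"
    unfolding s1_def B_def[symmetric] D_def[symmetric] cs den by (simp add: Re_divide_of_real)
  moreover have "(B + sqrt D) / (2 * A) < 0" using sq A by (intro divide_pos_neg) auto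
  ultimately show ?thesis by simp
qed

lemma part3:
  fixes alpha beta mu l1 l2 w :: real
  assumes "alpha > 0" "beta > 0" "w > 0" "l2 < mu" "l1 < mu"
  shows "Re (s1 alpha beta mu l1 l2 w) < 0 \<and> Re (s2 alpha beta mu l1 l2 w) < 0"
proof -
  define A where "A = (l1 - mu) * (l2 - mu)"
  define B where "B = bcoef alpha beta mu l1 l2 w"
  define D where "D = discr alpha beta mu l1 l2 w"
  have A: "A > 0" unfolding A_def using assms by (simp add: mult_neg_neg)
  have c: "w * (w + alpha + beta) > 0" using assms by simp
  have B: "B < 0" unfolding B_def bcoef_def using assms
    by (intro add_neg_neg mult_neg_pos) auto
  have den: "2 * (l1 - mu) * (l2 - mu) = 2 * A" unfolding A_def by simp
  have r1: "Re (s1 alpha beta mu l1 l2 w) = (B + Re (csqrt (complex_of_real D))) / (2 * A)"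
    unfolding s1_def B_def[symmetric] D_def[symmetric] den by (simp add: Re_divide_of_real)
  have r2: "Re (s2 alpha beta mu l1 l2 w) = (B - Re (csqrt (complex_of_real D))) / (2 * A)"
    unfolding s2_def B_def[symmetric] D_def[symmetric] den by (simp add: Re_divide_of_real)
  have key: "B + Re (csqrt (complex_of_real D)) < 0 \<and> B - Re (csqrt (complex_of_real D)) < 0"
  proof (cases "D \<ge> 0")
    case True
    have cs: "csqrt (complex_of_real D) = complex_of_real (sqrt D)" by (rule of_real_sqrt[OF True, symmetric])
    have "D = B^2 - 4 * (w * (w + alpha + beta)) * A" unfolding D_def B_def A_def discr_def by (simp add: algebra_simps)
    moreover have "4 * (w * (w + alpha + beta)) * A > 0" using A c by simp
    ultimately have "D < B^2" by linarith
    hence "sqrt D < sqrt (B^2)" by (rule real_sqrt_less_mono)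
    hence "sqrt D < - B" using B by simp
    moreover have "sqrt D \<ge> 0" using True by simp
    ultimately have "B + sqrt D < 0" "B - sqrt D < 0" using B by linarith+
    thus ?thesis unfolding cs by simp
  next
    case False
    hence "Re (csqrt (complex_of_real D)) = 0" by (simp add: csqrt_of_real_nonpos)
    thus ?thesis using B by simp
  qed
  show ?thesis unfolding r1 r2 using key A by (simp add: divide_neg_pos)
qed

lemma Delta_l1_mu: "Delta alpha beta mu mu l2 w s = complex_of_real (w * (w + alpha + beta)) - complex_of_real ((l2 - mu) * (w + alpha)) * s"
  unfolding Delta_def by (simp only: diff_self mult_zero_left of_real_0 add_0_left diff_0 add_0) (simp add: algebra_simps)

lemma part5:
  fixes alpha beta mu l1 l2 w :: real
  assumes "alpha > 0" "beta > 0" "w > 0" "l2 < mu" "l1 = mu"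
  shows "let s0 = complex_of_real (w * (w + alpha + beta) / ((l2 - mu) * (w + alpha)))
         in (\<forall>s. Delta alpha beta mu l1 l2 w s = 0 \<longleftrightarrow> s = s0) \<and> Re s0 < 0"
proof -
  define k where "k = (l2 - mu) * (w + alpha)"
  define c where "c = w * (w + alpha + beta)"
  have k: "k < 0" unfolding k_def using assms by (simp add: mult_neg_pos)
  have c: "c > 0" unfolding c_def using assms by simp
  have D: "Delta alpha beta mu l1 l2 w s = complex_of_real c - complex_of_real k * s" for s
    unfolding k_def c_def \<open>l1 = mu\<close> by (rule Delta_l1_mu)
  have kz: "complex_of_real k \<noteq> 0" using k by simp
  have iff: "Delta alpha beta mu l1 l2 w s = 0 \<longleftrightarrow> s = complex_of_real (c / k)" for s
  proof
    assume "Delta alpha beta mu l1 l2 w s = 0"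
    hence "complex_of_real k * s = complex_of_real c" unfolding D by simp
    hence "s = complex_of_real c / complex_of_real k" using kz by (simp add: eq_divide_eq mult.commute)
    thus "s = complex_of_real (c / k)" by simp
  next
    assume "s = complex_of_real (c / k)"
    hence "complex_of_real k * s = complex_of_real c" using kz by (simp add: of_real_divide)
    thus "Delta alpha beta mu l1 l2 w s = 0" unfolding D by simp
  qed
  have neg: "c / k < 0" using c k by (simp add: divide_pos_neg)
  have eq: "w * (w + alpha + beta) / ((l2 - mu) * (w + alpha)) = c / k" by (simp only: k_def c_def)
  show ?thesis unfolding Let_def eq using iff neg by simp
qed

theorem proposition1:
  fixes alpha beta mu l1 l2 w :: real
  assumes "alpha > 0" and "beta > 0" and "mu > 0"
    and "l1 \<ge> 0" and "l2 \<ge> 0" and "l1 > l2" and "w > 0"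
  shows
    "(l2 > mu \<longrightarrow>
        (\<forall>x>0. \<forall>I X. fluid_path l1 l2 mu x I X \<longrightarrow>
            \<not> starvation X \<and> (\<forall>t\<ge>0. X t > 0)))
   \<and> (l2 < mu \<and> mu < l1 \<longrightarrow>
        Re (s2 alpha beta mu l1 l2 w) > 0 \<and> Re (s1 alpha beta mu l1 l2 w) < 0)
   \<and> (l2 < mu \<and> l1 < mu \<longrightarrow>
        Re (s1 alpha beta mu l1 l2 w) < 0 \<and> Re (s2 alpha beta mu l1 l2 w) < 0)
   \<and> (l2 = mu \<longrightarrow>
        (\<forall>x>0. \<forall>I X. fluid_path l1 l2 mu x I X \<longrightarrow>
            \<not> starvation X \<and> (\<forall>t\<ge>0. X t > 0)))
   \<and> (l1 = mu \<longrightarrow>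
        (let s0 = complex_of_real (w * (w + alpha + beta) / ((l2 - mu) * (w + alpha)))
         in (\<forall>s. Delta alpha beta mu l1 l2 w s = 0 \<longleftrightarrow> s = s0) \<and> Re s0 < 0))"
proof -
  have P1: "\<forall>x>0. \<forall>I X. fluid_path l1 l2 mu x I X \<longrightarrow> \<not> starvation X \<and> (\<forall>t\<ge>0. X t > 0)"
    if h: "l2 \<ge> mu"
  proof (intro allI impI)
    fix x I X assume "x > 0" "fluid_path l1 l2 mu x I X"
    thus "\<not> starvation X \<and> (\<forall>t\<ge>0. X t > 0)"
      by (intro no_starve) (use h assms(6) in auto)
  qed
  have c1: "l2 > mu \<longrightarrow> (\<forall>x>0. \<forall>I X. fluid_path l1 l2 mu x I X \<longrightarrow>
            \<not> starvation X \<and> (\<forall>t\<ge>0. X t > 0))" using P1 by simp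
  have c4: "l2 = mu \<longrightarrow> (\<forall>x>0. \<forall>I X. fluid_path l1 l2 mu x I X \<longrightarrow>
            \<not> starvation X \<and> (\<forall>t\<ge>0. X t > 0))" using P1 by simp
  have c2: "l2 < mu \<and> mu < l1 \<longrightarrow>
        Re (s2 alpha beta mu l1 l2 w) > 0 \<and> Re (s1 alpha beta mu l1 l2 w) < 0"
    using part2[OF assms(1,2,7)] by blast
  have c3: "l2 < mu \<and> l1 < mu \<longrightarrow>
        Re (s1 alpha beta mu l1 l2 w) < 0 \<and> Re (s2 alpha beta mu l1 l2 w) < 0"
    using part3[OF assms(1,2,7)] by blast
  have c5: "l1 = mu \<longrightarrow>
        (let s0 = complex_of_real (w * (w + alpha + beta) / ((l2 - mu) * (w + alpha)))
         in (\<forall>s. Delta alpha beta mu l1 l2 w s = 0 \<longleftrightarrow> s = s0) \<and> Re s0 < 0)"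
  proof
    assume h: "l1 = mu"
    show "let s0 = complex_of_real (w * (w + alpha + beta) / ((l2 - mu) * (w + alpha)))
         in (\<forall>s. Delta alpha beta mu l1 l2 w s = 0 \<longleftrightarrow> s = s0) \<and> Re s0 < 0"
      by (rule part5[OF assms(1,2,7) _ h]) (use assms(6) h in simp)
  qed
  show ?thesis by (intro conjI c1 c2 c3 c4 c5)
qed

end
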